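(* For every $n\ge1$, every integer $r\ge 0$, every $\lambda\ge 0$, every $y\in\mathbb{R}^n$ and every $i\in[n]$, $$\max_{J\in\mathcal{I}:\, i\in J}\ \min_{I\in\mathcal{I}:\, i\in I,\ I\subseteq J}\Big[(P^{(|I|,r)}y_I)_i+\frac{\lambda C_{I,J}}{|I|}\Big]\ \le\ \min_{J\in\mathcal{I}:\, i\in J}\ \max_{I\in\mathcal{I}:\, i\in I,\ I\subseteq J}\Big[(P^{(|I|,r)}y_I)_i-\frac{\lambda C_{I,J}}{|I|}\Big].$$
   Context: $[n]=\{1,\dots,n\}$. An interval of $[n]$ is $[a:b]=\{a,\dots,b\}$ with $1\le a\le b\le n$; $\mathcal{I}$ is the set of all intervals of $[n]$. For $v\in\mathbb{R}^n$ and an interval $I$, $v_I\in\mathbb{R}^{|I|}$ is the restriction of $v$ to $I$. For an interval $I=[a:b]$ and integer $r\ge0$, let $S^{(I,r)}=\{(p(a/n),p((a+1)/n),\dots,p(b/n)) : p \text{ a real polynomial of degree at most } r\}\subseteq\mathbb{R}^{|I|}$; this subspace depends only on $|I|$, and $P^{(|I|,r)}$ denotes the orthogonal projection matrix onto it. For $i\in I$, $(P^{(|I|,r)}y_I)_i$ denotes the entry of the vector $P^{(|I|,r)}y_I$ at the position corresponding to $i$ (i.e. position $i-a+1$). For intervals $I\subseteq J$ with $J=[j_1:j_2]$: $C_{I,J}=1$ if $I$ contains neither $j_1$ nor $j_2$; $C_{I,J}=-1$ if $I=J$; $C_{I,J}=0$ otherwise. *)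

theory Defs
  imports "HOL-Computational_Algebra.Polynomial"
begin

text \<open>Intervals [a:b] of [n] are represented by pairs (a,b) with 1 <= a <= b <= n.
  Vectors in R^n are functions nat => real with indices 1..n; a vector in R^{|I|}
  for I = [a:b] is represented as a function indexed by a..b (zero outside).\<close>

definition intervals :: "nat \<Rightarrow> (nat \<times> nat) set" where
  "intervals n = {(a, b). 1 \<le> a \<and> a \<le> b \<and> b \<le> n}"

definition ivl :: "nat \<times> nat \<Rightarrow> nat set" where
  "ivl I = {fst I..snd I}"

definition ivl_len :: "nat \<times> nat \<Rightarrow> nat" where
  "ivl_len I = snd I + 1 - fst I"

definition poly_space :: "nat \<Rightarrow> nat \<Rightarrow> nat \<times> nat \<Rightarrow> (nat \<Rightarrow> real) set" where
  "poly_space n r I = {v. \<exists>p :: real poly. degree p \<le> r \<and>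
      (\<forall>k. v k = (if k \<in> ivl I then poly p (real k / real n) else 0))}"

definition proj :: "nat \<Rightarrow> nat \<Rightarrow> nat \<times> nat \<Rightarrow> (nat \<Rightarrow> real) \<Rightarrow> (nat \<Rightarrow> real)" where
  "proj n r I y = (THE v. v \<in> poly_space n r I \<and>
      (\<forall>w \<in> poly_space n r I. (\<Sum>k\<in>ivl I. (y k - v k) * w k) = 0))"

definition Ccoef :: "nat \<times> nat \<Rightarrow> nat \<times> nat \<Rightarrow> real" where
  "Ccoef I J = (if I = J then -1
     else if fst J \<notin> ivl I \<and> snd J \<notin> ivl I then 1 else 0)"

end

theory Submission
  imports Defs
begin

lemma fin_int: "finite (intervals n)"
proof -
  have "intervals n \<subseteq> {1..n} \<times> {1..n}" by (auto simp: intervals_def)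
  then show ?thesis by (rule finite_subset) auto
qed

lemma C_sum:
  assumes "a1 \<le> b1" "a2 \<le> b2" "max a1 a2 \<le> min b1 b2"
  shows "Ccoef (max a1 a2, min b1 b2) (a1, b1) + Ccoef (max a1 a2, min b1 b2) (a2, b2) \<le> (0::real)"
  using assms unfolding Ccoef_def ivl_def by (auto split: if_splits simp: max_def min_def)

lemma key:
  fixes lam :: real and f :: "nat \<times> nat \<Rightarrow> real"
  assumes "lam \<ge> 0" and J1: "J1 \<in> intervals n" "i \<in> ivl J1"
    and J2: "J2 \<in> intervals n" "i \<in> ivl J2"
  shows "Min ((\<lambda>I. f I + lam * Ccoef I J1 / real (ivl_len I))
                 ` {I \<in> intervals n. i \<in> ivl I \<and> ivl I \<subseteq> ivl J1})
        \<le> Max ((\<lambda>I. f I - lam * Ccoef I J2 / real (ivl_len I))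
                 ` {I \<in> intervals n. i \<in> ivl I \<and> ivl I \<subseteq> ivl J2})"
proof -
  obtain a1 b1 where e1: "J1 = (a1, b1)" by (cases J1)
  obtain a2 b2 where e2: "J2 = (a2, b2)" by (cases J2)
  define I where "I = (max a1 a2, min b1 b2)"
  have h: "1 \<le> a1" "a1 \<le> b1" "b1 \<le> n" "1 \<le> a2" "a2 \<le> b2" "b2 \<le> n"
    "a1 \<le> i" "i \<le> b1" "a2 \<le> i" "i \<le> b2"
    using J1 J2 e1 e2 by (auto simp: intervals_def ivl_def)
  have I1: "I \<in> {I \<in> intervals n. i \<in> ivl I \<and> ivl I \<subseteq> ivl J1}"
    using h by (auto simp: I_def e1 intervals_def ivl_def)
  have I2: "I \<in> {I \<in> intervals n. i \<in> ivl I \<and> ivl I \<subseteq> ivl J2}"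
    using h by (auto simp: I_def e2 intervals_def ivl_def)
  have "max a1 a2 \<le> min b1 b2" using h by simp
  then have "ivl_len I > 0" unfolding ivl_len_def I_def fst_conv snd_conv by linarith
  then have len: "real (ivl_len I) > 0" by simp
  have cs: "Ccoef I J1 + Ccoef I J2 \<le> 0"
    unfolding I_def e1 e2 using h by (intro C_sum) auto
  have "lam * Ccoef I J1 \<le> - (lam * Ccoef I J2)"
  proof -
    have "lam * (Ccoef I J1 + Ccoef I J2) \<le> 0"
      using assms(1) cs by (simp add: mult_nonneg_nonpos)
    then show ?thesis by (simp add: algebra_simps)
  qed
  then have step: "f I + lam * Ccoef I J1 / real (ivl_len I) \<le> f I - lam * Ccoef I J2 / real (ivl_len I)"
  proof -
    have "lam * Ccoef I J1 / real (ivl_len I) \<le> - (lam * Ccoef I J2) / real (ivl_len I)"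
      using len \<open>lam * Ccoef I J1 \<le> - (lam * Ccoef I J2)\<close> by (intro divide_right_mono) auto
    then show ?thesis by (simp only: minus_divide_left[symmetric])
  qed
  have fin1: "finite {I \<in> intervals n. i \<in> ivl I \<and> ivl I \<subseteq> ivl J1}" using fin_int by auto
  have fin2: "finite {I \<in> intervals n. i \<in> ivl I \<and> ivl I \<subseteq> ivl J2}" using fin_int by auto
  have "Min ((\<lambda>I. f I + lam * Ccoef I J1 / real (ivl_len I))
                 ` {I \<in> intervals n. i \<in> ivl I \<and> ivl I \<subseteq> ivl J1}) \<le> f I + lam * Ccoef I J1 / real (ivl_len I)"
    using fin1 I1 by (intro Min_le) auto
  also note step
  also have "f I - lam * Ccoef I J2 / real (ivl_len I) \<le> Max ((\<lambda>I. f I - lam * Ccoef I J2 / real (ivl_len I))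
                 ` {I \<in> intervals n. i \<in> ivl I \<and> ivl I \<subseteq> ivl J2})"
    using fin2 I2 by (intro Max_ge) auto
  finally show ?thesis .
qed

theorem lemma1:
  fixes n r :: nat and lam :: real and y :: "nat \<Rightarrow> real" and i :: nat
  assumes "n \<ge> 1" and "lam \<ge> 0" and "i \<in> {1..n}"
  shows "Max ((\<lambda>J. Min ((\<lambda>I. proj n r I y i + lam * Ccoef I J / real (ivl_len I))
                 ` {I \<in> intervals n. i \<in> ivl I \<and> ivl I \<subseteq> ivl J}))
             ` {J \<in> intervals n. i \<in> ivl J})
         \<le> Min ((\<lambda>J. Max ((\<lambda>I. proj n r I y i - lam * Ccoef I J / real (ivl_len I))
                 ` {I \<in> intervals n. i \<in> ivl I \<and> ivl I \<subseteq> ivl J}))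
             ` {J \<in> intervals n. i \<in> ivl J})"
proof -
  have fin: "finite {J \<in> intervals n. i \<in> ivl J}" using fin_int by auto
  have ne: "(i, i) \<in> {J \<in> intervals n. i \<in> ivl J}"
    using assms(3) by (auto simp: intervals_def ivl_def)
  show ?thesis
    using fin ne
    by (subst Max_le_iff; (subst Min_ge_iff)?) (auto intro!: key[OF assms(2)])
qed

end
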